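(* Let $A$ be a synaptic algebra and let $p,q\in P$ be in generic position ($p\wedge q=p\wedge q^{\perp}=p^{\perp}\wedge q=p^{\perp}\wedge q^{\perp}=0$). Let $c:=(pqp+p^{\perp}q^{\perp}p^{\perp})^{1/2}$, $s:=(pq^{\perp}p+p^{\perp}qp^{\perp})^{1/2}$, let $u$, $v$ and $k$ be the symmetries of the polar decompositions of $p-q^{\perp}$, $p-q$ and $pqp^{\perp}+p^{\perp}qp$ respectively, and put $j:=uvp+pvu$. Then: (i) $c^{\circ}=s^{\circ}=(cs)^{\circ}=(csj)^{\circ}=1$; (ii) $uv+vu=0$; (iii) $j=k$.
   Context: Synaptic algebra (Foulis): $R$ is a real linear associative algebra with unit $1$, and $A\subseteq R$ is a real linear subspace with $1\in A$. For $a,b\in A$ write $aCb$ iff $ab=ba$; $C(a):=\{b\in A: aCb\}$; $CC(a):=\{b\in A: bCd \text{ for all } d\in C(a)\}$. $A$ is a synaptic algebra with enveloping algebra $R$ iff: (SA1) $A$ is a partially ordered archimedean real linear space with positive cone $A^+$, $1$ is an order unit, $\|\cdot\|$ the order-unit norm; (SA2) $a\in A\Rightarrow a^2\in A^+$; (SA3) $a,b\in A^+\Rightarrow aba\in A^+$; (SA4) if $a\in A$, $b\in A^+$, $aba=0$ then $ab=ba=0$; (SA5) if $a\in A^+$ there is $b\in A^+\cap CC(a)$ with $b^2=a$; (SA6) for $a\in A$ there is $p=p^2\in A$ with $ab=0\Leftrightarrow pb=0$ for all $b\in A$; (SA7) if $1\le a$ there is $b\in A$ with $ab=ba=1$; (SA8)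 if $a,b\in A$, $a_1\le a_2\le\cdots$ are pairwise commuting elements of $C(b)$ with $\|a-a_n\|\to0$, then $a\in C(b)$. $A$ is nondegenerate. Products are computed in $R$ ($c$, $s$, $j$ pairwise commute, so $cs,csj\in A$). $P:=\{p\in A:p=p^2\}$ with inherited order is an orthomodular lattice with $p^{\perp}:=1-p$, meet $\wedge$, join $\vee$. For $0\le a$, $a^{1/2}$ is its unique positive square root in $A$, $|a|:=(a^2)^{1/2}$; $a^{\circ}$ is the carrier of $a$ (the unique projection with $ab=0\Leftrightarrow a^{\circ}b=0$ for all $b\in A$). A symmetry is $u\in A$ with $u^2=1$. For $a\in A$, the signum $t$ of $a$ is the partial symmetry with $t^2=a^{\circ}$, $t\in CC(a)$, $a=|a|t=t|a|$; the symmetry of the polar decomposition of $a$ is $t+(a^{\circ})^{\perp}$. *)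

theory Defs
  imports Complex_Main
begin

text \<open>The enveloping algebra R is the type 'a
  (a real associative algebra with unit, class real_algebra_1, in which 0 \<noteq> 1,
  i.e. nondegenerate); A is a subset of it; the order of A is given by its
  positive cone Apos.\<close>

definition sa_le :: "'a::real_algebra_1 set \<Rightarrow> 'a \<Rightarrow> 'a \<Rightarrow> bool" where
  "sa_le Apos a b \<longleftrightarrow> b - a \<in> Apos"

definition commutes :: "'a::real_algebra_1 \<Rightarrow> 'a \<Rightarrow> bool" where
  "commutes a b \<longleftrightarrow> a * b = b * a"

definition sa_C :: "'a::real_algebra_1 set \<Rightarrow> 'a \<Rightarrow> 'a set" where
  "sa_C A a = {b \<in> A. commutes a b}"

definition sa_CC :: "'a::real_algebra_1 set \<Rightarrow> 'a \<Rightarrow> 'a set" where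
  "sa_CC A a = {b \<in> A. \<forall>d\<in>sa_C A a. commutes b d}"

definition ou_norm :: "'a::real_algebra_1 set \<Rightarrow> 'a \<Rightarrow> real" where
  "ou_norm Apos a = Inf {r. 0 \<le> r \<and> sa_le Apos (- (r *\<^sub>R 1)) a \<and> sa_le Apos a (r *\<^sub>R 1)}"

definition synaptic_algebra :: "'a::real_algebra_1 set \<Rightarrow> 'a set \<Rightarrow> bool" where
  "synaptic_algebra A Apos \<longleftrightarrow>
     \<comment> \<open>A is a real linear subspace of R containing 1\<close>
     0 \<in> A \<and> 1 \<in> A \<and> (\<forall>a\<in>A. \<forall>b\<in>A. a + b \<in> A) \<and> (\<forall>r. \<forall>a\<in>A. r *\<^sub>R a \<in> A) \<and>
     \<comment> \<open>SA1: partially ordered (positive cone), archimedean, 1 an order unit\<close>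
     Apos \<subseteq> A \<and> (\<forall>a\<in>Apos. \<forall>b\<in>Apos. a + b \<in> Apos) \<and>
     (\<forall>r\<ge>0. \<forall>a\<in>Apos. r *\<^sub>R a \<in> Apos) \<and>
     (\<forall>a\<in>Apos. - a \<in> Apos \<longrightarrow> a = 0) \<and>
     (\<forall>a\<in>A. \<forall>b\<in>A. (\<forall>n::nat. sa_le Apos (real n *\<^sub>R a) b) \<longrightarrow> sa_le Apos a 0) \<and>
     (\<forall>a\<in>A. \<exists>r>0. sa_le Apos (- (r *\<^sub>R 1)) a \<and> sa_le Apos a (r *\<^sub>R 1)) \<and>
     \<comment> \<open>SA2\<close>
     (\<forall>a\<in>A. a * a \<in> Apos) \<and>
     \<comment> \<open>SA3\<close>
     (\<forall>a\<in>Apos. \<forall>b\<in>Apos. a * b * a \<in> Apos) \<and>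
     \<comment> \<open>SA4\<close>
     (\<forall>a\<in>A. \<forall>b\<in>Apos. a * b * a = 0 \<longrightarrow> a * b = 0 \<and> b * a = 0) \<and>
     \<comment> \<open>SA5\<close>
     (\<forall>a\<in>Apos. \<exists>b\<in>Apos. b \<in> sa_CC A a \<and> b * b = a) \<and>
     \<comment> \<open>SA6\<close>
     (\<forall>a\<in>A. \<exists>p\<in>A. p * p = p \<and> (\<forall>b\<in>A. a * b = 0 \<longleftrightarrow> p * b = 0)) \<and>
     \<comment> \<open>SA7\<close>
     (\<forall>a\<in>A. sa_le Apos 1 a \<longrightarrow> (\<exists>b\<in>A. a * b = 1 \<and> b * a = 1)) \<and>
     \<comment> \<open>SA8\<close>
     (\<forall>a\<in>A. \<forall>b\<in>A. \<forall>s::nat \<Rightarrow> 'a.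
        (\<forall>n. s n \<in> sa_C A b) \<and> (\<forall>n. sa_le Apos (s n) (s (Suc n))) \<and>
        (\<forall>m n. commutes (s m) (s n)) \<and>
        ((\<lambda>n. ou_norm Apos (a - s n)) \<longlonglongrightarrow> 0)
        \<longrightarrow> a \<in> sa_C A b)"

definition sa_P :: "'a::real_algebra_1 set \<Rightarrow> 'a set" where
  "sa_P A = {p \<in> A. p * p = p}"

definition perp :: "'a::real_algebra_1 \<Rightarrow> 'a" where
  "perp p = 1 - p"

definition is_proj_meet :: "'a::real_algebra_1 set \<Rightarrow> 'a set \<Rightarrow> 'a \<Rightarrow> 'a \<Rightarrow> 'a \<Rightarrow> bool" where
  "is_proj_meet A Apos p q m \<longleftrightarrow> m \<in> sa_P A \<and> sa_le Apos m p \<and> sa_le Apos m q \<and>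
     (\<forall>r\<in>sa_P A. sa_le Apos r p \<and> sa_le Apos r q \<longrightarrow> sa_le Apos r m)"

definition proj_meet :: "'a::real_algebra_1 set \<Rightarrow> 'a set \<Rightarrow> 'a \<Rightarrow> 'a \<Rightarrow> 'a" where
  "proj_meet A Apos p q = (THE m. is_proj_meet A Apos p q m)"

definition generic_position :: "'a::real_algebra_1 set \<Rightarrow> 'a set \<Rightarrow> 'a \<Rightarrow> 'a \<Rightarrow> bool" where
  "generic_position A Apos p q \<longleftrightarrow>
     proj_meet A Apos p q = 0 \<and> proj_meet A Apos p (perp q) = 0 \<and>
     proj_meet A Apos (perp p) q = 0 \<and> proj_meet A Apos (perp p) (perp q) = 0"

definition sa_sqrt :: "'a::real_algebra_1 set \<Rightarrow> 'a \<Rightarrow> 'a" where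
  "sa_sqrt Apos a = (THE b. b \<in> Apos \<and> b * b = a)"

definition sa_abs :: "'a::real_algebra_1 set \<Rightarrow> 'a \<Rightarrow> 'a" where
  "sa_abs Apos a = sa_sqrt Apos (a * a)"

definition carrier_of :: "'a::real_algebra_1 set \<Rightarrow> 'a \<Rightarrow> 'a" where
  "carrier_of A a = (THE p. p \<in> sa_P A \<and> (\<forall>b\<in>A. a * b = 0 \<longleftrightarrow> p * b = 0))"

definition signum :: "'a::real_algebra_1 set \<Rightarrow> 'a set \<Rightarrow> 'a \<Rightarrow> 'a" where
  "signum A Apos a = (THE t. t \<in> A \<and> t * t = carrier_of A a \<and> t \<in> sa_CC A a \<and>
       a = sa_abs Apos a * t \<and> a = t * sa_abs Apos a)"

definition polar_symmetry :: "'a::real_algebra_1 set \<Rightarrow> 'a set \<Rightarrow> 'a \<Rightarrow> 'a" where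
  "polar_symmetry A Apos a = signum A Apos a + perp (carrier_of A a)"

end

theory Submission
  imports Defs
begin



locale sa =
  fixes A Apos :: "'a::real_algebra_1 set"
  assumes SA: "synaptic_algebra A Apos"
begin

lemma SAu: "0 \<in> A \<and> 1 \<in> A \<and> (\<forall>a\<in>A. \<forall>b\<in>A. a + b \<in> A) \<and> (\<forall>r. \<forall>a\<in>A. r *\<^sub>R a \<in> A) \<and>
     Apos \<subseteq> A \<and> (\<forall>a\<in>Apos. - a \<in> Apos \<longrightarrow> a = 0) \<and>
     (\<forall>a\<in>A. a * a \<in> Apos) \<and>
     (\<forall>a\<in>Apos. \<forall>b\<in>Apos. a * b * a \<in> Apos) \<and>
     (\<forall>a\<in>A. \<forall>b\<in>Apos. a * b * a = 0 \<longrightarrow> a * b = 0 \<and> b * a = 0) \<and>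
     (\<forall>a\<in>Apos. \<exists>b\<in>Apos. b \<in> sa_CC A a \<and> b * b = a) \<and>
     (\<forall>a\<in>A. \<exists>p\<in>A. p * p = p \<and> (\<forall>b\<in>A. a * b = 0 \<longleftrightarrow> p * b = 0))"
  using SA unfolding synaptic_algebra_def by simp

lemma A0: "0 \<in> A" by (rule SAu[THEN conjunct1])
lemma A1: "1 \<in> A" by (rule SAu[THEN conjunct2, THEN conjunct1])
lemma Aadd: "a \<in> A \<Longrightarrow> b \<in> A \<Longrightarrow> a + b \<in> A" using SAu[THEN conjunct2, THEN conjunct2, THEN conjunct1] by blast
lemma Ascale: "a \<in> A \<Longrightarrow> r *\<^sub>R a \<in> A" using SAu[THEN conjunct2, THEN conjunct2, THEN conjunct2, THEN conjunct1] by blast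
lemma PosA: "x \<in> Apos \<Longrightarrow> x \<in> A" using SAu[THEN conjunct2, THEN conjunct2, THEN conjunct2, THEN conjunct2, THEN conjunct1] by blast
lemma Pos_anti: "x \<in> Apos \<Longrightarrow> - x \<in> Apos \<Longrightarrow> x = 0" using SAu[THEN conjunct2, THEN conjunct2, THEN conjunct2, THEN conjunct2, THEN conjunct2, THEN conjunct1] by blast
lemma SA2: "a \<in> A \<Longrightarrow> a * a \<in> Apos" using SAu[THEN conjunct2, THEN conjunct2, THEN conjunct2, THEN conjunct2, THEN conjunct2, THEN conjunct2, THEN conjunct1] by blast
lemma SA3: "x \<in> Apos \<Longrightarrow> y \<in> Apos \<Longrightarrow> x * y * x \<in> Apos" using SAu[THEN conjunct2, THEN conjunct2, THEN conjunct2, THEN conjunct2, THEN conjunct2, THEN conjunct2, THEN conjunct2, THEN conjunct1] by blast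
lemma SA4: "a \<in> A \<Longrightarrow> y \<in> Apos \<Longrightarrow> a * y * a = 0 \<Longrightarrow> a * y = 0 \<and> y * a = 0" using SAu[THEN conjunct2, THEN conjunct2, THEN conjunct2, THEN conjunct2, THEN conjunct2, THEN conjunct2, THEN conjunct2, THEN conjunct2, THEN conjunct1] by blast
lemma SA5: "x \<in> Apos \<Longrightarrow> \<exists>b\<in>Apos. b \<in> sa_CC A x \<and> b * b = x" using SAu[THEN conjunct2, THEN conjunct2, THEN conjunct2, THEN conjunct2, THEN conjunct2, THEN conjunct2, THEN conjunct2, THEN conjunct2, THEN conjunct2, THEN conjunct1] by blast
lemma SA6: "a \<in> A \<Longrightarrow> \<exists>p\<in>A. p * p = p \<and> (\<forall>b\<in>A. a * b = 0 \<longleftrightarrow> p * b = 0)" using SAu[THEN conjunct2, THEN conjunct2, THEN conjunct2, THEN conjunct2, THEN conjunct2, THEN conjunct2, THEN conjunct2, THEN conjunct2, THEN conjunct2, THEN conjunct2] by blast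

lemma Aminus: "a \<in> A \<Longrightarrow> - a \<in> A"
  using Ascale[of a "-1"] by simp
lemma Adiff: "a \<in> A \<Longrightarrow> b \<in> A \<Longrightarrow> a - b \<in> A"
proof -
  assume "a \<in> A" "b \<in> A"
  hence "a + (- b) \<in> A" using Aadd Aminus by blast
  thus ?thesis by simp
qed
lemma Asq: "a \<in> A \<Longrightarrow> a * a \<in> A" using SA2 PosA by blast
lemma Ajor: "a \<in> A \<Longrightarrow> b \<in> A \<Longrightarrow> a * b + b * a \<in> A"
proof -
  assume a: "a \<in> A" and b: "b \<in> A"
  have "a * b + b * a = (a + b) * (a + b) - a * a - b * b" by (simp add: algebra_simps)
  thus ?thesis using a b by (simp add: Adiff Asq Aadd)
qed
lemma half: "(x::'a) = (1/2) *\<^sub>R (x + x)"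
  by (simp add: scaleR_2[symmetric])
lemma Atri: "a \<in> A \<Longrightarrow> b \<in> A \<Longrightarrow> a * b * a \<in> A"
proof -
  assume a: "a \<in> A" and b: "b \<in> A"
  have "a * b * a + a * b * a = a * (a * b + b * a) + (a * b + b * a) * a - ((a * a) * b + b * (a * a))"
    by (simp add: algebra_simps)
  also have "\<dots> \<in> A" using a b by (intro Adiff Ajor Asq)
  finally have "(1/2) *\<^sub>R (a * b * a + a * b * a) \<in> A" by (rule Ascale)
  thus ?thesis using half[of "a*b*a"] by simp
qed
lemma Acomm: "a \<in> A \<Longrightarrow> b \<in> A \<Longrightarrow> a * b = b * a \<Longrightarrow> a * b \<in> A"
proof -
  assume a: "a \<in> A" and b: "b \<in> A" and ab: "a * b = b * a"
  have "(1/2) *\<^sub>R (a * b + b * a) \<in> A" using Ajor[OF a b] by (rule Ascale)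
  thus ?thesis using half[of "a*b"] ab by simp
qed
lemma Pos1: "1 \<in> Apos" using SA2[OF A1] by simp
lemma proj_pos: "e \<in> A \<Longrightarrow> e * e = e \<Longrightarrow> e \<in> Apos" using SA2 by metis
lemma cone0: "x \<in> Apos \<Longrightarrow> y \<in> Apos \<Longrightarrow> x + y = 0 \<Longrightarrow> x = 0"
proof -
  assume "x \<in> Apos" "y \<in> Apos" "x + y = 0"
  moreover have "y = - x" using \<open>x + y = 0\<close> by (simp add: eq_neg_iff_add_eq_0 add.commute)
  ultimately show "x = 0" using Pos_anti by simp
qed
lemma sq0: "a \<in> A \<Longrightarrow> a * a = 0 \<Longrightarrow> a = 0"
  using SA4[OF _ Pos1, of a] by simp
lemma tr: "a \<in> A \<Longrightarrow> b \<in> A \<Longrightarrow> a * b = 0 \<Longrightarrow> b * a = 0"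
proof -
  assume a: "a \<in> A" and b: "b \<in> A" and ab: "a * b = 0"
  let ?m = "a * b + b * a"
  have "?m * ?m = a * b * (a * b) + a * b * (b * a) + b * a * (a * b) + b * (a * b) * a"
    by (simp add: algebra_simps)
  also have "\<dots> = 0" using ab by simp
  finally have "?m = 0" using sq0 Ajor a b by blast
  thus ?thesis using ab by simp
qed
lemma B5: "a \<in> Apos \<Longrightarrow> b \<in> A \<Longrightarrow> a * (b * b) = 0 \<Longrightarrow> a * b = 0"
proof -
  assume a: "a \<in> Apos" and b: "b \<in> A" and h: "a * (b * b) = 0"
  have aA: "a \<in> A" using a PosA by blast
  have h2: "b * b * a = 0" using tr[OF aA Asq[OF b] h] .
  have "(b * a * b) * (b * a * b) = b * a * (b * b * a) * b" by (simp add: algebra_simps)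
  also have "\<dots> = 0" using h2 by simp
  finally have "b * a * b = 0" using sq0 Atri[OF b aA] by blast
  hence "b * a = 0" using SA4[OF b a] by blast
  thus ?thesis using tr[OF b aA] by blast
qed

definition injA :: "'a \<Rightarrow> bool" where "injA a \<longleftrightarrow> (\<forall>b\<in>A. a * b = 0 \<longrightarrow> b = 0)"

definition cspec :: "'a \<Rightarrow> 'a \<Rightarrow> bool" where
  "cspec a e \<longleftrightarrow> e \<in> A \<and> e * e = e \<and> (\<forall>b\<in>A. a * b = 0 \<longleftrightarrow> e * b = 0)"

lemma cspec_ann: "cspec a e \<Longrightarrow> b \<in> A \<Longrightarrow> a * b = 0 \<longleftrightarrow> e * b = 0"
  unfolding cspec_def by blast

lemma cspec_unique: "a \<in> A \<Longrightarrow> cspec a e \<Longrightarrow> cspec a e' \<Longrightarrow> e = e'"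
proof -
  assume a: "a \<in> A" and e: "cspec a e" and e': "cspec a e'"
  have eA: "e \<in> A" "e * e = e" and e'A: "e' \<in> A" "e' * e' = e'" using e e' cspec_def by auto
  have "e * (1 - e) = 0" using eA by (simp add: algebra_simps)
  hence "a * (1 - e) = 0" using e Adiff[OF A1 eA(1)] cspec_def by blast
  hence "e' * (1 - e) = 0" using e' Adiff[OF A1 eA(1)] cspec_def by blast
  hence 1: "(1 - e) * e' = 0" using tr e'A Adiff[OF A1 eA(1)] by blast
  have "e' * (1 - e') = 0" using e'A by (simp add: algebra_simps)
  hence "a * (1 - e') = 0" using e' Adiff[OF A1 e'A(1)] cspec_def by blast
  hence "e * (1 - e') = 0" using e Adiff[OF A1 e'A(1)] cspec_def by blast
  hence "e = e * e'" by (simp add: algebra_simps)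
  moreover have "e' = e * e'" using 1 by (simp add: algebra_simps)
  ultimately show ?thesis by simp
qed

lemma cspec_carrier: "a \<in> A \<Longrightarrow> cspec a (carrier_of A a)"
proof -
  assume a: "a \<in> A"
  obtain e where e: "e \<in> A" "e * e = e" "\<forall>b\<in>A. a * b = 0 \<longleftrightarrow> e * b = 0" using SA6[OF a] by blast
  have ce: "cspec a e" using e cspec_def by blast
  have "carrier_of A a = e" unfolding carrier_of_def
  proof (rule the_equality)
    show "e \<in> sa_P A \<and> (\<forall>b\<in>A. a * b = 0 \<longleftrightarrow> e * b = 0)" using e sa_P_def by blast
    fix e' assume "e' \<in> sa_P A \<and> (\<forall>b\<in>A. a * b = 0 \<longleftrightarrow> e' * b = 0)"
    hence "cspec a e'" using sa_P_def cspec_def by blast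
    thus "e' = e" using cspec_unique[OF a ce] by blast
  qed
  thus ?thesis using ce by simp
qed

lemma carrier_eq: "a \<in> A \<Longrightarrow> cspec a e \<Longrightarrow> carrier_of A a = e"
  using cspec_carrier cspec_unique by blast

lemma carrier_one: "a \<in> A \<Longrightarrow> injA a \<Longrightarrow> carrier_of A a = 1"
  apply (rule carrier_eq, assumption)
  unfolding cspec_def injA_def using A1 by auto

lemma cspec_props: "a \<in> A \<Longrightarrow> cspec a e \<Longrightarrow> a * e = a \<and> e * a = a"
proof -
  assume a: "a \<in> A" and e: "cspec a e"
  have eA: "e \<in> A" "e * e = e" using e cspec_def by auto
  have "e * (1 - e) = 0" using eA by (simp add: algebra_simps)
  hence 1: "a * (1 - e) = 0" using e Adiff[OF A1 eA(1)] cspec_def by blast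
  hence "(1 - e) * a = 0" using tr a Adiff[OF A1 eA(1)] by blast
  thus ?thesis using 1 by (simp add: algebra_simps)
qed

lemma cspec_CC: "a \<in> A \<Longrightarrow> cspec a e \<Longrightarrow> d \<in> A \<Longrightarrow> d * a = a * d \<Longrightarrow> d * e = e * d"
proof -
  assume a: "a \<in> A" and e: "cspec a e" and d: "d \<in> A" and da: "d * a = a * d"
  have eA: "e \<in> A" "e * e = e" using e cspec_def by auto
  have ee: "\<And>x. e * (e * x) = e * x" using eA(2) by (metis mult.assoc)
  have ae: "a * e = a" using cspec_props[OF a e] by blast
  have ae2: "\<And>x. a * (e * x) = a * x" using ae by (metis mult.assoc)
  have fA: "1 - e \<in> A" using Adiff[OF A1 eA(1)] .
  have da2: "\<And>x. d * (a * x) = a * (d * x)" using da by (metis mult.assoc)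
  have "a * (d * (1 - e) + (1 - e) * d) = d * (a - a * e) + (a - a * e) * d"
    using da by (simp add: algebra_simps da2)
  also have "\<dots> = 0" using ae by simp
  finally have "e * (d * (1 - e) + (1 - e) * d) = 0"
    using cspec_ann[OF e Ajor[OF d fA]] by blast
  hence "e * d - e * d * e = 0" by (simp add: algebra_simps ee eA(2))
  hence 1: "e * d * e = e * d" by simp
  let ?b = "e * d + d * e - (e * d * e + e * d * e)"
  have bA: "?b \<in> A" using Adiff[OF Ajor[OF eA(1) d] Aadd[OF Atri[OF eA(1) d] Atri[OF eA(1) d]]] .
  have b: "?b = d * e - e * d * e" using 1 by simp
  have "?b * ?b = (d * e - e * d * e) * (d * e - e * d * e)" using b by simp
  also have "\<dots> = d * (e * d * e) - d * e * (e * d * e) - e * d * (e * d * e) + e * d * e * (e * d * e)"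
    by (simp add: algebra_simps)
  also have "\<dots> = 0" using eA 1 by (simp add: mult.assoc ee)
  finally have "?b = 0" using sq0 bA by blast
  thus ?thesis using b 1 by simp
qed

end


context sa begin

lemma comm_CC: "x \<in> sa_CC A a \<Longrightarrow> d \<in> A \<Longrightarrow> a * d = d * a \<Longrightarrow> x * d = d * x"
  unfolding sa_CC_def sa_C_def commutes_def by blast

lemma dbl0: "(x::'a) + x = 0 \<Longrightarrow> x = 0"
  using half[of x] by simp

lemma sqrt_uniq:
  assumes a: "a \<in> Apos" and b0: "b0 \<in> Apos" "b0 \<in> sa_CC A a" "b0 * b0 = a"
    and b': "b' \<in> Apos" "b' * b' = a"
  shows "b' = b0"
proof -
  have b0A: "b0 \<in> A" and b'A: "b' \<in> A" using b0 b' PosA by auto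
  have "b' * a = a * b'" using b'(2) by (metis mult.assoc)
  hence cm: "b0 * b' = b' * b0" using comm_CC[OF b0(2) b'A] by simp
  define d where "d = b0 - b'"
  define r where "r = b0 + b'"
  have rA: "r \<in> A" using r_def Aadd b0A b'A by simp
  have dA: "d \<in> A" using d_def Adiff b0A b'A by simp
  have "r * d = b0 * b0 - b' * b' + (b' * b0 - b0 * b')" unfolding r_def d_def by (simp add: algebra_simps)
  hence rd: "r * d = 0" using b0(3) b'(2) cm by simp
  define e where "e = carrier_of A r"
  have ce: "cspec r e" using cspec_carrier[OF rA] e_def by simp
  have eA: "e \<in> A" "e * e = e" using ce cspec_def by auto
  have ed: "e * d = 0" using cspec_ann[OF ce dA] rd by simp
  define f where "f = 1 - e"
  have fA: "f \<in> A" using f_def Adiff[OF A1 eA(1)] by simp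
  have ff: "f * f = f" unfolding f_def using eA(2) by (simp add: algebra_simps)
  have fP: "f \<in> Apos" using proj_pos[OF fA ff] .
  have "r * f = 0" unfolding f_def using cspec_props[OF rA ce] by (simp add: algebra_simps)
  hence "f * r = 0" using tr rA fA by blast
  moreover have "f * b0 * f + f * b' * f = (f * r) * f" unfolding r_def by (simp add: algebra_simps)
  ultimately have "f * b0 * f + f * b' * f = 0" by simp
  hence 1: "f * b0 * f = 0" and 2: "f * b' * f = 0"
    using cone0[OF SA3[OF fP b0(1)] SA3[OF fP b'(1)]] cone0[OF SA3[OF fP b'(1)] SA3[OF fP b0(1)]]
    by (auto simp: add.commute)
  have "f * b0 = 0" using SA4[OF fA b0(1) 1] by blast
  moreover have "f * b' = 0" using SA4[OF fA b'(1) 2] by blast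
  ultimately have "f * d = 0" unfolding d_def by (simp add: algebra_simps)
  hence "d = 0" using ed f_def by (simp add: algebra_simps)
  thus ?thesis using d_def by simp
qed

lemma sqrt_props:
  assumes a: "a \<in> Apos"
  shows "sa_sqrt Apos a \<in> Apos \<and> sa_sqrt Apos a * sa_sqrt Apos a = a \<and> sa_sqrt Apos a \<in> sa_CC A a"
proof -
  obtain b0 where b0: "b0 \<in> Apos" "b0 \<in> sa_CC A a" "b0 * b0 = a" using SA5[OF a] by blast
  have "sa_sqrt Apos a = b0" unfolding sa_sqrt_def
  proof (rule the_equality)
    show "b0 \<in> Apos \<and> b0 * b0 = a" using b0 by simp
    fix b' assume "b' \<in> Apos \<and> b' * b' = a"
    thus "b' = b0" using sqrt_uniq[OF a b0] by blast
  qed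
  thus ?thesis using b0 by simp
qed

lemma sqrt_eq:
  assumes b: "b \<in> Apos" shows "sa_sqrt Apos (b * b) = b"
proof -
  have a: "b * b \<in> Apos" using SA2 PosA b by blast
  note sp = sqrt_props[OF a]
  show ?thesis using sqrt_uniq[OF a sp[THEN conjunct1] sp[THEN conjunct2, THEN conjunct2]
       sp[THEN conjunct2, THEN conjunct1] b] by simp
qed

lemma projker:
  assumes e: "e \<in> A" "e * e = e" and f: "f \<in> A" "f * f = f" and b: "b \<in> A"
    and h: "e * f * e * b = 0" and g: "injA g" and gd: "g = 1 - e + f"
  shows "e * b = 0"
proof -
  have ee: "\<And>x. e * (e * x) = e * x" using e(2) by (metis mult.assoc)
  define w where "w = e * (b * b) * e"
  have wA: "w \<in> A" using w_def Atri[OF e(1) Asq[OF b]] by simp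
  have we: "w * e = w" and ew: "e * w = w" unfolding w_def using e(2) by (simp_all add: mult.assoc ee)
  have "e * f * e * w = (e * f * e * b) * b * e" unfolding w_def by (simp add: mult.assoc ee)
  hence 1: "e * f * e * w = 0" using h by simp
  have "w * f * w = w * (e * f * e * w)" using we ew by (metis mult.assoc)
  hence "w * f * w = 0" using 1 by simp
  hence "w * f = 0" using SA4[OF wA proj_pos[OF f]] by blast
  hence fw: "f * w = 0" using tr wA f(1) by blast
  have "g * w = w - e * w + f * w" unfolding gd by (simp add: algebra_simps)
  hence "g * w = 0" using ew fw by simp
  hence "w = 0" using g wA injA_def by blast
  hence "e * (b * b) * e = 0" using w_def by simp
  hence "e * (b * b) = 0" using SA4[OF e(1) SA2[OF b]] by blast
  thus ?thesis using B5[OF proj_pos[OF e] b] by blast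
qed

end


context sa begin

lemma rc: "(x::'a) * (1 - y) = 0 \<Longrightarrow> x * y = x"
proof -
  assume h: "x * (1 - y) = 0"
  have "x - x * y = x * (1 - y)" by (simp add: algebra_simps)
  thus ?thesis using h by simp
qed
lemma lc: "(1 - y) * (x::'a) = 0 \<Longrightarrow> y * x = x"
proof -
  assume h: "(1 - y) * x = 0"
  have "x - y * x = (1 - y) * x" by (simp add: algebra_simps)
  thus ?thesis using h by simp
qed

lemma signum_props:
  assumes a: "a \<in> A" and inj: "injA (a * a)"
  shows "polar_symmetry A Apos a \<in> A \<and> polar_symmetry A Apos a * polar_symmetry A Apos a = 1 \<and>
         polar_symmetry A Apos a \<in> sa_CC A a \<and>
         sa_sqrt Apos (a * a) * polar_symmetry A Apos a = a \<and>
         polar_symmetry A Apos a * sa_sqrt Apos (a * a) = a \<and> carrier_of A a = 1"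
proof -
  have aaP: "a * a \<in> Apos" using SA2[OF a] .
  define r where "r = sa_sqrt Apos (a * a)"
  have rP: "r \<in> Apos" and rr: "r * r = a * a" and rCC: "r \<in> sa_CC A (a * a)"
    using sqrt_props[OF aaP] r_def by auto
  have rA: "r \<in> A" using rP PosA by blast
  have ra: "r * a = a * r" using comm_CC[OF rCC a] by (simp add: mult.assoc)
  have injr: "injA r" unfolding injA_def
  proof (intro ballI impI)
    fix b assume b: "b \<in> A" "r * b = 0"
    hence "r * r * b = 0" by (simp add: mult.assoc)
    hence "a * a * b = 0" using rr by simp
    thus "b = 0" using inj b injA_def by blast
  qed
  have inja: "injA a" unfolding injA_def
  proof (intro ballI impI)
    fix b assume b: "b \<in> A" "a * b = 0"
    hence "a * a * b = 0" by (simp add: mult.assoc)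
    thus "b = 0" using inj b injA_def by blast
  qed
  have car1: "carrier_of A a = 1" using carrier_one[OF a inja] .
  define w where "w = r + a"
  define z where "z = r - a"
  have wA: "w \<in> A" unfolding w_def using Aadd rA a by blast
  have zA: "z \<in> A" unfolding z_def using Adiff rA a by blast
  have wz: "w * z = 0" unfolding w_def z_def using rr ra by (simp add: algebra_simps)
  have zw: "z * w = 0" unfolding w_def z_def using rr ra by (simp add: algebra_simps)
  define e where "e = carrier_of A w"
  define f where "f = carrier_of A z"
  have ce: "cspec w e" using cspec_carrier[OF wA] e_def by simp
  have cf: "cspec z f" using cspec_carrier[OF zA] f_def by simp
  have eA: "e \<in> A" "e * e = e" using ce cspec_def by auto
  have fA: "f \<in> A" "f * f = f" using cf cspec_def by auto
  have we: "w * e = w" and ew: "e * w = w" using cspec_props[OF wA ce] by auto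
  have zf: "z * f = z" and fz: "f * z = z" using cspec_props[OF zA cf] by auto
  have ez: "e * z = 0" using cspec_ann[OF ce zA] wz by simp
  have ze: "z * e = 0" using tr[OF eA(1) zA ez] .
  have fw: "f * w = 0" using cspec_ann[OF cf wA] zw by simp
  have wf: "w * f = 0" using tr[OF fA(1) wA fw] .
  have fe: "f * e = 0" using cspec_ann[OF cf eA(1)] ze by simp
  have ef: "e * f = 0" using tr[OF fA(1) eA(1) fe] .
  define g where "g = 1 - e - f"
  have gA: "g \<in> A" unfolding g_def using Adiff A1 eA(1) fA(1) by blast
  have wg: "w * g = 0" unfolding g_def using we wf by (simp add: algebra_simps)
  have zg: "z * g = 0" unfolding g_def using ze zf by (simp add: algebra_simps)
  have "r * g + r * g = w * g + z * g" unfolding w_def z_def by (simp add: algebra_simps)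
  hence "r * g = 0" using wg zg dbl0[of "r * g"] by simp
  hence "g = 0" using injr gA injA_def by blast
  hence ef1: "e + f = 1" unfolding g_def by (simp add: algebra_simps)
  define t where "t = e - f"
  have tA: "t \<in> A" unfolding t_def using Adiff eA(1) fA(1) by blast
  have tt: "t * t = 1" unfolding t_def using eA(2) fA(2) ef fe ef1 by (simp add: algebra_simps)
  have "(r * t - a) + (r * t - a) = w * e - w * f + z * e - z * f - w + z"
    unfolding t_def w_def z_def by (simp add: algebra_simps)
  hence rt: "r * t = a" using we wf ze zf dbl0[of "r * t - a"] by simp
  have "(t * r - a) + (t * r - a) = e * w - f * w + e * z - f * z - w + z"
    unfolding t_def w_def z_def by (simp add: algebra_simps)
  hence tr': "t * r = a" using ew fw ez fz dbl0[of "t * r - a"] by simp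
  have tCC: "t \<in> sa_CC A a" unfolding sa_CC_def sa_C_def commutes_def
  proof (intro CollectI conjI ballI tA)
    fix d assume "d \<in> {b \<in> A. a * b = b * a}"
    hence d: "d \<in> A" "a * d = d * a" by auto
    have "a * a * d = a * (d * a)" using d(2) by (simp add: mult.assoc)
    also have "\<dots> = d * (a * a)" using d(2) by (simp add: mult.assoc[symmetric])
    finally have "a * a * d = d * (a * a)" .
    hence rd: "r * d = d * r" using comm_CC[OF rCC d(1)] by simp
    have "d * w = w * d" unfolding w_def using rd d(2) by (simp add: algebra_simps)
    hence de: "d * e = e * d" using cspec_CC[OF wA ce d(1)] by simp
    have "d * z = z * d" unfolding z_def using rd d(2) by (simp add: algebra_simps)
    hence df: "d * f = f * d" using cspec_CC[OF zA cf d(1)] by simp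
    show "t * d = d * t" unfolding t_def using de df by (simp add: algebra_simps)
  qed
  have sg: "signum A Apos a = t" unfolding signum_def
  proof (rule the_equality)
    show "t \<in> A \<and> t * t = carrier_of A a \<and> t \<in> sa_CC A a \<and> a = sa_abs Apos a * t \<and> a = t * sa_abs Apos a"
      using tA tt car1 tCC rt tr' unfolding sa_abs_def r_def by simp
    fix t' assume "t' \<in> A \<and> t' * t' = carrier_of A a \<and> t' \<in> sa_CC A a \<and> a = sa_abs Apos a * t' \<and> a = t' * sa_abs Apos a"
    hence t': "t' \<in> A" "r * t' = a" unfolding sa_abs_def r_def by auto
    have "r * (t' - t) = 0" using t'(2) rt by (simp add: algebra_simps)
    hence "t' - t = 0" using injr Adiff[OF t'(1) tA] injA_def by blast
    thus "t' = t" by simp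
  qed
  have "polar_symmetry A Apos a = t" unfolding polar_symmetry_def sg car1 perp_def by simp
  thus ?thesis using tA tt tCC rt tr' car1 r_def by simp
qed

lemma meet:
  assumes p: "p \<in> A" "p * p = p" and q: "q \<in> A" "q * q = q"
  shows "proj_meet A Apos p q = 1 - carrier_of A (perp p + perp q)"
proof -
  define x where "x = perp p + perp q"
  have pp: "perp p \<in> A" "perp p * perp p = perp p" unfolding perp_def using p Adiff A1
    by (auto simp: algebra_simps)
  have qq: "perp q \<in> A" "perp q * perp q = perp q" unfolding perp_def using q Adiff A1
    by (auto simp: algebra_simps)
  have xA: "x \<in> A" unfolding x_def using Aadd pp qq by blast
  define e where "e = carrier_of A x"
  have ce: "cspec x e" using cspec_carrier[OF xA] e_def by simp
  have eA: "e \<in> A" "e * e = e" using ce cspec_def by auto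
  define m where "m = 1 - e"
  have mA: "m \<in> A" unfolding m_def using Adiff A1 eA(1) by blast
  have mm: "m * m = m" unfolding m_def using eA(2) by (simp add: algebra_simps)
  have mP: "m \<in> Apos" using proj_pos[OF mA mm] .
  have "x * m = 0" unfolding m_def using cspec_props[OF xA ce] by (simp add: algebra_simps)
  hence "m * x = 0" using tr[OF xA mA] by simp
  hence "m * x * m = 0" by simp
  hence s0: "m * perp p * m + m * perp q * m = 0" unfolding x_def by (simp add: algebra_simps)
  have pP: "perp p \<in> Apos" using proj_pos[OF pp] .
  have qP: "perp q \<in> Apos" using proj_pos[OF qq] .
  have "m * perp p * m = 0" using cone0[OF SA3[OF mP pP] SA3[OF mP qP] s0] .
  hence mp: "m * perp p = 0 \<and> perp p * m = 0" using SA4[OF mA pP] by blast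
  have "m * perp q * m = 0" using cone0[OF SA3[OF mP qP] SA3[OF mP pP]] s0 by (simp add: add.commute)
  hence mq: "m * perp q = 0 \<and> perp q * m = 0" using SA4[OF mA qP] by blast
  have lep: "sa_le Apos m p" unfolding sa_le_def
  proof -
    have a1: "m * p = m" using rc mp unfolding perp_def by blast
    have a2: "p * m = m" using lc mp unfolding perp_def by blast
    have "(p - m) * (p - m) = p * p - p * m - m * p + m * m" by (simp add: algebra_simps)
    hence "p - m = (p - m) * (p - m)" using a1 a2 p(2) mm by simp
    thus "p - m \<in> Apos" using SA2[OF Adiff[OF p(1) mA]] by simp
  qed
  have leq: "sa_le Apos m q" unfolding sa_le_def
  proof -
    have a1: "m * q = m" using rc mq unfolding perp_def by blast
    have a2: "q * m = m" using lc mq unfolding perp_def by blast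
    have "(q - m) * (q - m) = q * q - q * m - m * q + m * m" by (simp add: algebra_simps)
    hence "q - m = (q - m) * (q - m)" using a1 a2 q(2) mm by simp
    thus "q - m \<in> Apos" using SA2[OF Adiff[OF q(1) mA]] by simp
  qed
  have ismeet: "is_proj_meet A Apos p q m"
    unfolding is_proj_meet_def
  proof (intro conjI ballI impI)
    show "m \<in> sa_P A" using mA mm sa_P_def by blast
    show "sa_le Apos m p" by (rule lep)
    show "sa_le Apos m q" by (rule leq)
    fix r assume r: "r \<in> sa_P A" and le: "sa_le Apos r p \<and> sa_le Apos r q"
    have rA: "r \<in> A" "r * r = r" using r sa_P_def by auto
    have rp: "perp p0 * r = 0" if p0: "p0 \<in> A" "p0 * p0 = p0" and le: "p0 - r \<in> Apos" for p0
    proof -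
      have pp0: "perp p0 \<in> A" "perp p0 * perp p0 = perp p0" unfolding perp_def using p0 Adiff A1
        by (auto simp: algebra_simps)
      have pp0os: "perp p0 \<in> Apos" using proj_pos[OF pp0] .
      have "perp p0 * (p0 - r) * perp p0 = - (perp p0 * r * perp p0)" unfolding perp_def
        using p0(2) by (simp add: algebra_simps)
      hence "- (perp p0 * r * perp p0) \<in> Apos" using SA3[OF pp0os le] by simp
      hence "perp p0 * r * perp p0 = 0" using Pos_anti SA3[OF pp0os proj_pos[OF rA]] by blast
      thus ?thesis using SA4[OF pp0(1) proj_pos[OF rA]] by blast
    qed
    have "perp p * r = 0" using rp[OF p] le sa_le_def by blast
    moreover have "perp q * r = 0" using rp[OF q] le sa_le_def by blast
    ultimately have "x * r = 0" unfolding x_def by (simp add: algebra_simps)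
    hence er: "e * r = 0" using cspec_ann[OF ce rA(1)] by simp
    hence re: "r * e = 0" using tr[OF eA(1) rA(1)] by simp
    have "(m - r) * (m - r) = m * m - m * r - r * m + r * r" by (simp add: algebra_simps)
    moreover have "m * r = r" "r * m = r" unfolding m_def using er re by (simp_all add: algebra_simps)
    ultimately have "m - r = (m - r) * (m - r)" using mm rA(2) by simp
    thus "sa_le Apos r m" unfolding sa_le_def using SA2[OF Adiff[OF mA rA(1)]] by simp
  qed
  have "proj_meet A Apos p q = m" unfolding proj_meet_def
  proof (rule the_equality)
    show "is_proj_meet A Apos p q m" by (rule ismeet)
    fix m' assume m': "is_proj_meet A Apos p q m'"
    have "sa_le Apos m' m" using ismeet m' unfolding is_proj_meet_def by blast
    moreover have "sa_le Apos m m'" using ismeet m' unfolding is_proj_meet_def by blast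
    ultimately have "m - m' \<in> Apos" "- (m - m') \<in> Apos" unfolding sa_le_def by auto
    hence "m - m' = 0" using Pos_anti by blast
    thus "m' = m" by simp
  qed
  thus ?thesis using m_def e_def x_def by simp
qed

lemma gen_inj:
  assumes p: "p \<in> A" "p * p = p" and q: "q \<in> A" "q * q = q" and h: "proj_meet A Apos p q = 0"
  shows "injA (perp p + perp q)"
proof -
  have xA: "perp p + perp q \<in> A" unfolding perp_def using Aadd Adiff A1 p q by blast
  have "carrier_of A (perp p + perp q) = 1" using meet[OF p q] h by simp
  hence "cspec (perp p + perp q) 1" using cspec_carrier[OF xA] by simp
  thus ?thesis unfolding cspec_def injA_def by simp
qed

end



lemma swap2: "(a::'a::real_algebra_1) * b = c \<Longrightarrow> a * (b * x) = c * x"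
  by (simp add: mult.assoc[symmetric])
lemma swapn: "(a::'a::real_algebra_1) * b = - c \<Longrightarrow> a * (b * x) = - (c * x)"
  by (simp add: mult.assoc[symmetric])

context sa begin
lemma injprod:
  assumes x: "x \<in> A" and y: "y \<in> Apos" and ix: "injA x" and iy: "injA y"
  shows "injA (x * y)"
  unfolding injA_def
proof (intro ballI impI)
  fix b assume b: "b \<in> A" and h: "x * y * b = 0"
  have yA: "y \<in> A" using y PosA by blast
  define w where "w = y * (b * b) * y"
  have wA: "w \<in> A" unfolding w_def using Atri[OF yA Asq[OF b]] .
  have "x * w = (x * y * b) * b * y" unfolding w_def by (simp add: mult.assoc)
  hence "x * w = 0" using h by simp
  hence "w = 0" using ix wA injA_def by blast
  hence "y * (b * b) * y = 0" using w_def by simp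
  hence "y * (b * b) = 0" using SA4[OF yA SA2[OF b]] by blast
  hence "y * b = 0" using B5[OF y b] by blast
  thus "b = 0" using iy b injA_def by blast
qed
end

theorem lemma7p7:
  fixes A Apos :: "'a::real_algebra_1 set" and p q :: 'a
  assumes SA: "synaptic_algebra A Apos"
    and pP: "p \<in> sa_P A" and qP: "q \<in> sa_P A"
    and gen: "generic_position A Apos p q"
  defines "c \<equiv> sa_sqrt Apos (p * q * p + perp p * perp q * perp p)"
    and "s \<equiv> sa_sqrt Apos (p * perp q * p + perp p * q * perp p)"
    and "u \<equiv> polar_symmetry A Apos (p - perp q)"
    and "v \<equiv> polar_symmetry A Apos (p - q)"
    and "k \<equiv> polar_symmetry A Apos (p * q * perp p + perp p * q * p)"
    and "j \<equiv> polar_symmetry A Apos (p - perp q) * polar_symmetry A Apos (p - q) * p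
             + p * polar_symmetry A Apos (p - q) * polar_symmetry A Apos (p - perp q)"
  shows "(carrier_of A c = 1 \<and> carrier_of A s = 1 \<and> carrier_of A (c * s) = 1 \<and>
         carrier_of A (c * s * j) = 1) \<and>
         u * v + v * u = 0 \<and>
         j = k"
proof -
  interpret sa A Apos using SA by (rule sa.intro)
  have pA: "p \<in> A" and pp: "p * p = p" using pP sa_P_def by auto
  have qA: "q \<in> A" and qq: "q * q = q" using qP sa_P_def by auto
  have pp2: "\<And>x. p * (p * x) = p * x" using pp by (simp add: mult.assoc[symmetric])
  have qq2: "\<And>x. q * (q * x) = q * x" using qq by (simp add: mult.assoc[symmetric])
  note pr = pp pp2 qq qq2
  have ppA: "perp p \<in> A" "perp p * perp p = perp p" unfolding perp_def using pA Adiff A1 pp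
    by (auto simp: algebra_simps)
  have pqA: "perp q \<in> A" "perp q * perp q = perp q" unfolding perp_def using qA Adiff A1 qq
    by (auto simp: algebra_simps)
  have perpp: "perp (perp x) = x" for x :: 'a unfolding perp_def by simp
  have m1: "proj_meet A Apos p q = 0" and m2: "proj_meet A Apos p (perp q) = 0"
    and m3: "proj_meet A Apos (perp p) q = 0" and m4: "proj_meet A Apos (perp p) (perp q) = 0"
    using gen generic_position_def by auto
  have i1: "injA (perp p + perp q)" using gen_inj[OF pA pp qA qq m1] .
  have i2: "injA (perp p + q)" using gen_inj[OF pA pp pqA m2] perpp by simp
  have i3: "injA (p + perp q)" using gen_inj[OF ppA qA qq m3] perpp by simp
  have i4: "injA (p + q)" using gen_inj[OF ppA pqA m4] perpp by simp
  define X where "X = p - perp q"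
  define Y where "Y = p - q"
  define K where "K = p * q * perp p + perp p * q * p"
  have XA: "X \<in> A" unfolding X_def using Adiff pA pqA by blast
  have YA: "Y \<in> A" unfolding Y_def using Adiff pA qA by blast
  have KA: "K \<in> A"
  proof -
    have "K = (p * q + q * p) - (p * q * p + p * q * p)" unfolding K_def perp_def
      by (simp add: algebra_simps pr)
    thus ?thesis using Adiff[OF Ajor[OF pA qA] Aadd[OF Atri[OF pA qA] Atri[OF pA qA]]] by simp
  qed
  have XX: "X * X = p * q * p + perp p * perp q * perp p" unfolding X_def perp_def
    by (simp add: algebra_simps pr)
  have YY: "Y * Y = p * perp q * p + perp p * q * perp p" unfolding Y_def perp_def
    by (simp add: algebra_simps pr)
  have XYa: "X * Y + Y * X = 0" unfolding X_def Y_def perp_def by (simp add: algebra_simps pr)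
  have XY1: "X * X + Y * Y = 1" unfolding X_def Y_def perp_def by (simp add: algebra_simps pr)
  have KXY: "K = X * Y * (X + Y)" unfolding K_def X_def Y_def perp_def by (simp add: algebra_simps pr)
  have KK: "K * K = X * X * (Y * Y)" unfolding K_def X_def Y_def perp_def by (simp add: algebra_simps pr)
  have p2: "p + p = 1 + X + Y" unfolding X_def Y_def perp_def by (simp add: algebra_simps)
  have injXX: "injA (X * X)" unfolding injA_def
  proof (intro ballI impI)
    fix b assume b: "b \<in> A" and h: "X * X * b = 0"
    have "p * q * p * b = p * (X * X * b)" unfolding XX by (simp add: algebra_simps perp_def pr)
    hence "p * q * p * b = 0" using h by simp
    hence 1: "p * b = 0" using projker[OF pA pp qA qq b _ i2] by (simp add: perp_def)
    have "perp p * perp q * perp p * b = perp p * (X * X * b)" unfolding XX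
      by (simp add: algebra_simps perp_def pr)
    hence "perp p * perp q * perp p * b = 0" using h by simp
    hence 2: "perp p * b = 0" using projker[OF ppA pqA b _ i3] by (simp add: perp_def)
    have "b = p * b + perp p * b" by (simp add: perp_def algebra_simps)
    thus "b = 0" using 1 2 by simp
  qed
  have injYY: "injA (Y * Y)" unfolding injA_def
  proof (intro ballI impI)
    fix b assume b: "b \<in> A" and h: "Y * Y * b = 0"
    have "p * perp q * p * b = p * (Y * Y * b)" unfolding YY by (simp add: algebra_simps perp_def pr)
    hence "p * perp q * p * b = 0" using h by simp
    hence 1: "p * b = 0" using projker[OF pA pp pqA b _ i1] by (simp add: perp_def)
    have "perp p * q * perp p * b = perp p * (Y * Y * b)" unfolding YY
      by (simp add: algebra_simps perp_def pr)
    hence "perp p * q * perp p * b = 0" using h by simp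
    hence 2: "perp p * b = 0" using projker[OF ppA qA qq b _ i4] by (simp add: perp_def)
    have "b = p * b + perp p * b" by (simp add: perp_def algebra_simps)
    thus "b = 0" using 1 2 by simp
  qed
  have cX: "c = sa_sqrt Apos (X * X)" unfolding c_def XX ..
  have sY: "s = sa_sqrt Apos (Y * Y)" unfolding s_def YY ..
  have XXP: "X * X \<in> Apos" using SA2[OF XA] .
  have YYP: "Y * Y \<in> Apos" using SA2[OF YA] .
  have XXA: "X * X \<in> A" using Asq[OF XA] .
  have YYA: "Y * Y \<in> A" using Asq[OF YA] .
  have cP: "c \<in> Apos" and cc: "c * c = X * X" and cCC: "c \<in> sa_CC A (X * X)"
    using sqrt_props[OF XXP] cX by auto
  have sP: "s \<in> Apos" and ss: "s * s = Y * Y" and sCC: "s \<in> sa_CC A (Y * Y)"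
    using sqrt_props[OF YYP] sY by auto
  have cA: "c \<in> A" using cP PosA by blast
  have sA: "s \<in> A" using sP PosA by blast
  have uu: "u \<in> A" "u * u = 1" "u \<in> sa_CC A X" "c * u = X" "u * c = X" "carrier_of A X = 1"
    using signum_props[OF XA injXX] unfolding u_def X_def[symmetric] cX[symmetric] by auto
  have vv: "v \<in> A" "v * v = 1" "v \<in> sa_CC A Y" "s * v = Y" "v * s = Y" "carrier_of A Y = 1"
    using signum_props[OF YA injYY] unfolding v_def Y_def[symmetric] sY[symmetric] by auto
  have YX: "Y * X = - (X * Y)" using XYa by (simp add: eq_neg_iff_add_eq_0 add.commute)
  have "Y * (X * X) = (Y * X) * X" by (simp add: mult.assoc)
  also have "\<dots> = - (X * (Y * X))" using YX by (simp add: mult.assoc)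
  also have "\<dots> = X * X * Y" using YX by (simp add: mult.assoc)
  finally have YXX: "X * X * Y = Y * (X * X)" by simp
  have cY: "c * Y = Y * c" using comm_CC[OF cCC YA YXX] .
  have uXX: "u * (X * X) = X * X * u" using comm_CC[OF uu(3) XXA] by (simp add: mult.assoc)
  have YYe: "Y * Y = 1 - X * X" using XY1 by (simp add: algebra_simps)
  have XXe: "X * X = 1 - Y * Y" using XY1 by (simp add: algebra_simps)
  have "Y * Y * u = u * (Y * Y)" unfolding YYe using uXX by (simp add: algebra_simps)
  hence su: "s * u = u * s" using comm_CC[OF sCC uu(1)] by simp
  have vYY: "v * (Y * Y) = Y * Y * v" using comm_CC[OF vv(3) YYA] by (simp add: mult.assoc)
  have "X * X * v = v * (X * X)" unfolding XXe using vYY by (simp add: algebra_simps)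
  hence cv: "c * v = v * c" using comm_CC[OF cCC vv(1)] by simp
  have sYY: "s * (Y * Y) = Y * Y * s" using comm_CC[OF sCC YYA] by simp
  have "X * X * s = s * (X * X)" unfolding XXe using sYY by (simp add: algebra_simps)
  hence cs: "c * s = s * c" using comm_CC[OF cCC sA] by simp
  have cu: "u * c = c * u" using uu by simp
  have sv: "v * s = s * v" using vv by simp
  have injc: "injA c" unfolding injA_def
  proof (intro ballI impI)
    fix b assume b: "b \<in> A" "c * b = 0"
    hence "c * c * b = 0" by (simp add: mult.assoc)
    hence "X * X * b = 0" using cc by simp
    thus "b = 0" using injXX b injA_def by blast
  qed
  have injs: "injA s" unfolding injA_def
  proof (intro ballI impI)
    fix b assume b: "b \<in> A" "s * b = 0"
    hence "s * s * b = 0" by (simp add: mult.assoc)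
    hence "Y * Y * b = 0" using ss by simp
    thus "b = 0" using injYY b injA_def by blast
  qed
  have "c * (u * Y + Y * u) = c * u * Y + Y * (c * u)" using cY
    by (simp add: algebra_simps swap2[OF cY])
  also have "\<dots> = 0" using uu(4) XYa by (simp add: add.commute)
  finally have uY: "u * Y + Y * u = 0" using injc Ajor[OF uu(1) YA] injA_def by blast
  have "s * (u * v + v * u) = u * (s * v) + s * v * u" using su
    by (simp add: algebra_simps swap2[OF su])
  also have "\<dots> = 0" using vv(4) uY by simp
  finally have uv: "u * v + v * u = 0" using injs Ajor[OF uu(1) vv(1)] injA_def by blast
  define h where "h = sa_sqrt Apos c"
  have hP: "h \<in> Apos" and hh: "h * h = c" and hCC: "h \<in> sa_CC A c"
    using sqrt_props[OF cP] h_def by auto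
  have hs: "h * s = s * h" using comm_CC[OF hCC sA cs] .
  have "h * s * h = s * (h * h)" using hs by (simp add: mult.assoc[symmetric])
  hence "h * s * h = c * s" using hh cs by simp
  hence csP: "c * s \<in> Apos" using SA3[OF hP sP] by simp
  have csA: "c * s \<in> A" using csP PosA by blast
  have "(c * s) * (c * s) = c * c * (s * s)" using swap2[OF cs[symmetric], of s]
    by (simp add: mult.assoc)
  hence KK': "K * K = (c * s) * (c * s)" using KK cc ss by simp
  have rK: "sa_sqrt Apos (K * K) = c * s" using sqrt_eq[OF csP] KK' by simp
  have injKK: "injA (K * K)" unfolding KK using injprod[OF XXA YYP injXX injYY] .
  have injcs: "injA (c * s)" unfolding injA_def
  proof (intro ballI impI)
    fix b assume b: "b \<in> A" "c * s * b = 0"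
    hence "c * s * (c * s) * b = 0" by (simp add: mult.assoc)
    hence "K * K * b = 0" using KK' by simp
    thus "b = 0" using injKK b injA_def by blast
  qed
  have kk: "k \<in> A" "k * k = 1" "c * s * k = K" "carrier_of A K = 1"
    using signum_props[OF KA injKK] unfolding k_def K_def[symmetric] rK by auto
  have vu: "v * u = - (u * v)" using uv by (simp add: eq_neg_iff_add_eq_0 add.commute)
  note nr = cu swap2[OF cu] sv swap2[OF sv] cv[symmetric] swap2[OF cv[symmetric]]
    su[symmetric] swap2[OF su[symmetric]] cs[symmetric] swap2[OF cs[symmetric]]
    vu swapn[OF vu] uu(2) swap2[OF uu(2)] vv(2) swap2[OF vv(2)]
  have Xe: "X = c * u" using uu by simp
  have Ye: "Y = s * v" using vv by simp
  have "K = c * s * (s * u - c * v)"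
    unfolding KXY Xe Ye by (simp add: algebra_simps nr)
  hence "c * s * (k - (s * u - c * v)) = 0" using kk(3) by (simp add: algebra_simps)
  moreover have "k - (s * u - c * v) \<in> A"
    using Adiff[OF kk(1) Adiff[OF Acomm[OF sA uu(1) su] Acomm[OF cA vv(1) cv]]] .
  ultimately have "k - (s * u - c * v) = 0" using injcs injA_def by blast
  hence ke: "k = s * u - c * v" by simp
  have jd: "j = u * v * p + p * v * u" unfolding j_def u_def v_def ..
  have "j + j = u * v * (p + p) + (p + p) * v * u" unfolding jd by (simp add: algebra_simps)
  also have "\<dots> = k + k" unfolding p2 Xe Ye ke by (simp add: algebra_simps nr)
  finally have "(j - k) + (j - k) = 0" by (simp add: algebra_simps)
  hence jk: "j = k" using dbl0[of "j - k"] by simp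
  have c1: "carrier_of A c = 1" using carrier_one[OF cA injc] .
  have s1: "carrier_of A s = 1" using carrier_one[OF sA injs] .
  have cs1: "carrier_of A (c * s) = 1" using carrier_one[OF csA injcs] .
  have csj1: "carrier_of A (c * s * j) = 1" using kk jk by simp
  show ?thesis using c1 s1 cs1 csj1 uv jk by simp
qed


end
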